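(* Let $\mathbf{u}=(u_n)$ be an a-sequence with bounded ratio sequence $(q_n)$. Write $S^*_\mathbf{u}=\{m_1<m_2<\cdots\}$ and $\delta_k=m_{k+1}-m_k$. Then: (a) if the sequence $(\delta_k)$ is unbounded, there are $\mathfrak{c}$ many elements $x\in\mathbb{T}$ with $\varrho_\mathbf{u}(x,0)=\frac{1}{q_\mathbf{u}}$; (b) if the sequence $(\delta_k)$ is bounded, then $|B^{\varrho_\mathbf{u}}_{1/q_\mathbf{u}}(0)|=\mathfrak{c}$.
   Context: An a-sequence is a strictly increasing sequence of integers $\mathbf{u}=(u_n)_{n\in\mathbb{N}}$ with $u_n\mid u_{n+1}$ for all $n$. Its ratios are $q_0=u_0$ and $q_n=u_n/u_{n-1}$ ($n>0$); $q_\mathbf{u}=\limsup_n q_n$ and $S^*_\mathbf{u}=\{m\in\mathbb{N}: q_m=q_\mathbf{u}\}$ (infinite when the ratios are bounded). $\mathbb{T}=\mathbb{R}/\mathbb{Z}$, $\|x\|$ is the distance from $x$ to the nearest integer, $d(x,y)=\|x-y\|$, $\varrho_\mathbf{u}(x,y)=\sup_n\max\{d(x,y),d(u_nx,u_ny)\}$, and $B^{\varrho_\mathbf{u}}_\varepsilon(0)=\{x\in\mathbb{T}:\varrho_\mathbf{u}(x,0)<\varepsilon\}$. $\mathfrak{c}$ denotes the cardinality of the continuum. *)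

theory Defs
  imports Complex_Main "HOL-Library.Extended_Real" "HOL-Library.Liminf_Limsup" "HOL-Library.Infinite_Set"
    "HOL-Library.Equipollence"
begin

definition a_seq :: "(nat \<Rightarrow> nat) \<Rightarrow> bool" where
  "a_seq u \<longleftrightarrow> strict_mono u \<and> (\<forall>n. u n dvd u (Suc n))"

definition ratio :: "(nat \<Rightarrow> nat) \<Rightarrow> nat \<Rightarrow> nat" where
  "ratio u n = (if n = 0 then u 0 else u n div u (n - 1))"

definition q_lim :: "(nat \<Rightarrow> nat) \<Rightarrow> real" where
  "q_lim u = real_of_ereal (limsup (\<lambda>n. ereal (real (ratio u n))))"

definition S_star :: "(nat \<Rightarrow> nat) \<Rightarrow> nat set" where
  "S_star u = {m. real (ratio u m) = q_lim u}"

definition delta :: "(nat \<Rightarrow> nat) \<Rightarrow> nat \<Rightarrow> nat" where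
  "delta u k = enumerate (S_star u) (Suc k) - enumerate (S_star u) k"

text \<open>distance to nearest integer; the torus T = R/Z is represented by [0,1)\<close>
definition tnorm :: "real \<Rightarrow> real" where
  "tnorm x = \<bar>x - of_int (round x)\<bar>"

definition rho_u :: "(nat \<Rightarrow> nat) \<Rightarrow> real \<Rightarrow> real \<Rightarrow> real" where
  "rho_u u x y = (SUP n. max (tnorm (x - y)) (tnorm (real (u n) * x - real (u n) * y)))"

end

theory Submission
  imports Defs
begin


lemma tnorm_shift: assumes "z \<in> \<int>" shows "tnorm (y + z) = tnorm y"
proof -
  obtain m where m: "z = of_int m" using assms by (auto elim: Ints_cases)
  have "y + of_int m + 1/2 = (y + 1/2) + of_int m" by simp
  hence "round (y + of_int m) = round y + m" unfolding round_def by (simp only: floor_add_int)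
  thus ?thesis unfolding tnorm_def m by simp
qed

lemma tnorm_small: assumes "\<bar>y\<bar> < 1/2" shows "tnorm y = \<bar>y\<bar>"
proof -
  have "round y = 0" by (rule round_unique') (use assms in simp)
  thus ?thesis unfolding tnorm_def by simp
qed

lemma tnorm_le: "tnorm y \<le> \<bar>y\<bar>"
proof (cases "\<bar>y\<bar> < 1/2")
  case True then show ?thesis using tnorm_small by simp
next
  case False
  have "tnorm y \<le> 1/2" unfolding tnorm_def using of_int_round_abs_le[of y] by (simp add: abs_minus_commute)
  with False show ?thesis by simp
qed

locale aseq = fixes u :: "nat \<Rightarrow> nat" assumes as: "a_seq u"
begin

lemma smono: "strict_mono u" using as unfolding a_seq_def by blast
lemma dvd1: "u n dvd u (Suc n)" using as unfolding a_seq_def by blast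

lemma u0: "u 0 \<ge> 1"
proof (rule ccontr)
  assume "\<not> u 0 \<ge> 1"
  hence "u 0 = 0" by simp
  with dvd1[of 0] have "u 1 = 0" by simp
  moreover have "u 0 < u 1" using smono by (simp add: strict_mono_def)
  ultimately show False by simp
qed

lemma u_pos: "u n > 0"
proof -
  have "u 0 \<le> u n" using smono by (simp add: strict_mono_less_eq)
  thus ?thesis using u0 by simp
qed

lemma u_dbl: "2 * u n \<le> u (Suc n)"
proof -
  obtain k where k: "u (Suc n) = u n * k" using dvd1 by (metis dvdE)
  have "u n < u (Suc n)" using smono by (simp add: strict_mono_def)
  have "k \<ge> 2"
  proof (rule ccontr)
    assume "\<not> k \<ge> 2"
    hence "k = 0 \<or> k = 1" by auto
    thus False using k \<open>u n < u (Suc n)\<close> by auto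
  qed
  with k show ?thesis by (simp add: mult.commute)
qed

lemma u_pow: "2 ^ i * u n \<le> u (n + i)"
proof (induction i)
  case 0 then show ?case by simp
next
  case (Suc i)
  have "2 ^ Suc i * u n = 2 * (2 ^ i * u n)" by simp
  also have "\<dots> \<le> 2 * u (n + i)" using Suc by simp
  also have "\<dots> \<le> u (n + Suc i)" using u_dbl[of "n+i"] by simp
  finally show ?case .
qed

lemma u_dvd: "m \<le> n \<Longrightarrow> u m dvd u n"
proof (induction n rule: dec_induct)
  case base then show ?case by simp
next
  case (step n) then show ?case using dvd1[of n] dvd_trans by blast
qed

lemma u_le: "m \<le> n \<Longrightarrow> u m \<le> u n"
  using smono strict_mono_less_eq by blast

lemma u_ge2: "2 ^ n \<le> u n"
  using u_pow[of n 0] u0 by (metis add_0 mult.commute mult_le_mono1 nat_mult_1 order_trans)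

end

locale tseq = aseq +
  fixes Q :: nat and s :: "nat \<Rightarrow> nat"
  assumes Q2: "2 \<le> Q" and sQ: "\<And>j. u (s j) = Q * u (s j - 1)"
    and s_gap: "\<And>j. s j + 2 \<le> s (Suc j)" and s0: "1 \<le> s 0"
begin

lemma s_smono: "strict_mono s"
  unfolding strict_mono_Suc_iff
proof
  fix n show "s n < s (Suc n)" using s_gap[of n] by simp
qed

lemma s_inj: "inj s" using s_smono strict_mono_imp_inj_on by blast

lemma s_ge: "s j \<ge> 1 + j"
proof (induction j)
  case 0 then show ?case using s0 by simp
next
  case (Suc j) then show ?case using s_gap[of j] by simp
qed

definition e :: "nat \<Rightarrow> real" where
  "e k = (if k \<in> range s then (-1) ^ (the_inv s k) else 0)"

definition w :: "nat \<Rightarrow> real" where "w k = e k / real (u k)"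
definition x :: real where "x = suminf w"
definition tail :: "nat \<Rightarrow> real" where "tail n = real (u n) * (\<Sum>i. w (i + Suc n))"
definition r :: "nat \<Rightarrow> real" where "r j = real (u (s j)) / real (u (s (Suc j)))"

lemma e_s: "e (s j) = (-1) ^ j"
  unfolding e_def using the_inv_f_f[OF s_inj] by simp

lemma e_not: "k \<notin> range s \<Longrightarrow> e k = 0" unfolding e_def by simp

lemma e_abs: "\<bar>e k\<bar> \<le> 1" unfolding e_def by auto

lemma e_Ints: "e k \<in> \<int>" unfolding e_def by auto

lemma e0: "e 0 = 0"
proof (rule e_not)
  show "0 \<notin> range s" using s_ge by (metis imageE le_add1 not_one_le_zero order_trans)
qed

lemma w_bound: "\<bar>w k\<bar> \<le> 1 / real (u k)"
  unfolding w_def using e_abs[of k] u_pos[of k] by (simp add: divide_right_mono abs_div)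

lemma w_bound2: "norm (w k) \<le> (1/2) ^ k"
proof -
  have "real (2 ^ k) \<le> real (u k)" using u_ge2 of_nat_le_iff by blast
  hence "1 / real (u k) \<le> 1 / 2 ^ k" by (simp add: frac_le)
  thus ?thesis using w_bound[of k] by (simp add: power_one_over)
qed

lemma w_summable: "summable w"
  by (rule summable_comparison_test'[of "\<lambda>k. (1/2::real) ^ k" 0]) (use w_bound2 in auto)

lemma w_summable_shift: "summable (\<lambda>i. w (i + m))"
  using w_summable by (simp add: summable_iff_shift)

lemma tail_step: "tail n = (real (u n) / real (u (Suc n))) * (e (Suc n) + tail (Suc n))"
proof -
  have "(\<Sum>i. w (Suc i + Suc n)) = (\<Sum>i. w (i + Suc n)) - w (0 + Suc n)"
    using suminf_split_head[OF w_summable_shift[of "Suc n"]] by simp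
  hence "(\<Sum>i. w (i + Suc n)) = w (Suc n) + (\<Sum>i. w (i + Suc (Suc n)))" by simp
  moreover have "(\<Sum>i. w (i + Suc (Suc n))) = tail (Suc n) / real (u (Suc n))"
    unfolding tail_def using u_pos[of "Suc n"] by simp
  ultimately show ?thesis unfolding tail_def w_def using u_pos[of "Suc n"]
    by (simp add: field_simps)
qed

lemma tail_jump_aux:
  assumes "Suc n \<le> m"
  shows "(\<forall>k. n < k \<longrightarrow> k < m \<longrightarrow> e k = 0) \<longrightarrow> tail n = (real (u n) / real (u m)) * (e m + tail m)"
  using assms
proof (induction m rule: dec_induct)
  case base then show ?case using tail_step[of n] by blast
next
  case (step m)
  show ?case
  proof
    assume H: "\<forall>k. n < k \<longrightarrow> k < Suc m \<longrightarrow> e k = 0"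
    have H2: "\<forall>k. n < k \<longrightarrow> k < m \<longrightarrow> e k = 0" using H by simp
    have "tail n = (real (u n) / real (u m)) * (e m + tail m)"
      using step.IH H2 by blast
    also have "e m = 0" using step.hyps H by simp
    also have "tail m = (real (u m) / real (u (Suc m))) * (e (Suc m) + tail (Suc m))"
      by (rule tail_step)
    finally show "tail n = (real (u n) / real (u (Suc m))) * (e (Suc m) + tail (Suc m))"
      using u_pos[of m] by simp
  qed
qed

lemma tail_jump:
  assumes "n < m" "\<And>k. n < k \<Longrightarrow> k < m \<Longrightarrow> e k = 0"
  shows "tail n = (real (u n) / real (u m)) * (e m + tail m)"
  using tail_jump_aux[of n m] assms by auto


lemma int_part: "real (u n) * x - tail n \<in> \<int>"
proof -
  have "x = (\<Sum>i. w (i + Suc n)) + sum w {..<Suc n}"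
    unfolding x_def by (rule suminf_split_initial_segment[OF w_summable])
  hence "real (u n) * x - tail n = real (u n) * sum w {..<Suc n}"
    unfolding tail_def by (simp add: algebra_simps)
  also have "\<dots> = (\<Sum>k<Suc n. e k * (real (u n) / real (u k)))"
    unfolding w_def sum_distrib_left by (rule sum.cong) auto
  also have "\<dots> \<in> \<int>"
  proof (rule Ints_sum)
    fix k assume "k \<in> {..<Suc n}"
    hence "k \<le> n" by simp
    then obtain c where c: "u n = u k * c" using u_dvd by (meson dvdE)
    hence "real (u n) / real (u k) = real c" using u_pos[of k] by simp
    thus "e k * (real (u n) / real (u k)) \<in> \<int>" using e_Ints by simp
  qed
  finally show ?thesis .
qed

lemma x_tail0: "real (u 0) * x = tail 0"
proof -
  have "x = (\<Sum>i. w (i + Suc 0)) + sum w {..<Suc 0}"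
    unfolding x_def by (rule suminf_split_initial_segment[OF w_summable])
  also have "sum w {..<Suc 0} = 0" unfolding w_def using e0 by simp
  finally show ?thesis unfolding tail_def by simp
qed

lemma tail_crude: "\<bar>tail n\<bar> \<le> 1"
proof -
  define g where "g i = (1/2::real) ^ i * (1 / (2 * real (u n)))" for i
  have b: "norm (w (i + Suc n)) \<le> g i" for i
  proof -
    have "2 ^ Suc i * u n \<le> u (i + Suc n)" using u_pow[of "Suc i" n] by (simp add: add.commute)
    hence "real (2 ^ Suc i * u n) \<le> real (u (i + Suc n))" by (simp only: of_nat_le_iff)
    hence "1 / real (u (i + Suc n)) \<le> 1 / real (2 ^ Suc i * u n)"
      using u_pos[of n] u_pos[of "i + Suc n"] by (intro divide_left_mono) (auto intro!: mult_pos_pos)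
    also have "\<dots> = g i" unfolding g_def by (simp add: power_one_over)
    finally show ?thesis using w_bound[of "i + Suc n"] by simp
  qed
  have sg: "summable g" unfolding g_def by (intro summable_mult2 summable_geometric) simp
  have "suminf g = 2 * (1 / (2 * real (u n)))"
    unfolding g_def by (subst suminf_mult2[symmetric]) (auto simp: suminf_geometric)
  hence sg2: "suminf g = 1 / real (u n)" by simp
  have "norm (\<Sum>i. w (i + Suc n)) \<le> 1 / real (u n)"
    using norm_suminf_le[of "\<lambda>i. w (i + Suc n)" g, OF b sg] sg2 by simp
  hence "\<bar>tail n\<bar> \<le> real (u n) * (1 / real (u n))"
    unfolding tail_def using u_pos[of n] by (simp only: abs_mult abs_of_nat) (intro mult_left_mono, auto)
  thus ?thesis using u_pos[of n] by simp
qed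

lemma r_pos: "0 < r j" unfolding r_def using u_pos by simp

lemma r_le: "r j \<le> 1/4"
proof -
  have a: "s j + 1 \<le> s (Suc j) - 1" using s_gap[of j] by simp
  have "2 * u (s j) \<le> u (s j + 1)" using u_dbl by simp
  also have "\<dots> \<le> u (s (Suc j) - 1)" using u_le[OF a] .
  finally have "2 * (2 * u (s j)) \<le> Q * u (s (Suc j) - 1)" using Q2 by (intro mult_le_mono) auto
  hence "4 * u (s j) \<le> u (s (Suc j))" using sQ[of "Suc j"] by simp
  hence "4 * real (u (s j)) \<le> real (u (s (Suc j)))" by (metis of_nat_le_iff of_nat_mult of_nat_numeral)
  thus ?thesis unfolding r_def using u_pos[of "s (Suc j)"] by (simp add: field_simps)
qed

lemma no_between: "s j < k \<Longrightarrow> k < s (Suc j) \<Longrightarrow> e k = 0"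
proof (rule e_not, rule notI)
  assume a: "s j < k" "k < s (Suc j)" "k \<in> range s"
  then obtain i where i: "k = s i" by auto
  have "j < i" using a(1) i strict_mono_less[OF s_smono] by simp
  moreover have "i < Suc j" using a(2) i strict_mono_less[OF s_smono] by simp
  ultimately show False by simp
qed

lemma tail_s: "tail (s j) = r j * ((-1) ^ Suc j + tail (s (Suc j)))"
proof -
  have "s j < s (Suc j)" using s_gap[of j] by simp
  from tail_jump[OF this no_between] show ?thesis unfolding r_def e_s by simp
qed

lemma tail_s_bound_k: "\<bar>tail (s j)\<bar> \<le> 1/3 + 2/3 * (1/4) ^ k"
proof (induction k arbitrary: j)
  case 0 show ?case using tail_crude[of "s j"] by simp
next
  case (Suc k)
  have "\<bar>tail (s j)\<bar> = r j * \<bar>(-1) ^ Suc j + tail (s (Suc j))\<bar>"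
    using tail_s[of j] r_pos[of j] by (simp add: abs_mult)
  also have "\<bar>(-1::real) ^ Suc j + tail (s (Suc j))\<bar> \<le> 1 + (1/3 + 2/3 * (1/4) ^ k)"
  proof -
    have "\<bar>(-1::real) ^ Suc j + tail (s (Suc j))\<bar> \<le> \<bar>(-1::real) ^ Suc j\<bar> + \<bar>tail (s (Suc j))\<bar>"
      by (rule abs_triangle_ineq)
    thus ?thesis using Suc.IH[of "Suc j"] by simp
  qed
  hence "r j * \<bar>(-1) ^ Suc j + tail (s (Suc j))\<bar> \<le> r j * (1 + (1/3 + 2/3 * (1/4) ^ k))"
    using r_pos[of j] by (intro mult_left_mono) auto
  also have "\<dots> \<le> 1/4 * (1 + (1/3 + 2/3 * (1/4) ^ k))"
    using r_le[of j] by (intro mult_right_mono) auto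
  also have "\<dots> = 1/3 + 2/3 * (1/4) ^ Suc k" by simp
  finally show ?case .
qed

lemma tail_s_bound: "\<bar>tail (s j)\<bar> \<le> 1/3"
proof (rule ccontr)
  assume "\<not> \<bar>tail (s j)\<bar> \<le> 1/3"
  hence "0 < (\<bar>tail (s j)\<bar> - 1/3) * 3/2" by simp
  hence "\<exists>k. (1/4::real) ^ k < (\<bar>tail (s j)\<bar> - 1/3) * 3/2"
    by (rule real_arch_pow_inv) simp
  then obtain k where k: "(1/4::real) ^ k < (\<bar>tail (s j)\<bar> - 1/3) * 3/2" by blast
  have "\<bar>tail (s j)\<bar> \<le> 1/3 + 2/3 * (1/4) ^ k" by (rule tail_s_bound_k)
  with k show False by simp
qed

lemma next_ex: "\<exists>j. n < s j \<and> (\<forall>k. n < k \<longrightarrow> k < s j \<longrightarrow> e k = 0)"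
proof -
  have ex: "\<exists>j. n < s j" using s_ge[of n] by (intro exI[of _ n]) simp
  define j where "j = (LEAST j. n < s j)"
  have j1: "n < s j" unfolding j_def using LeastI_ex[OF ex] .
  have "e k = 0" if "n < k" "k < s j" for k
  proof (rule e_not, rule notI)
    assume "k \<in> range s" then obtain i where i: "k = s i" by auto
    have "j \<le> i" unfolding j_def using that i by (intro Least_le) simp
    hence "s j \<le> s i" using strict_mono_less_eq[OF s_smono] by simp
    thus False using that i by simp
  qed
  thus ?thesis using j1 by blast
qed


lemma est:
  assumes n: "n < s j" and nb: "\<And>k. n < k \<Longrightarrow> k < s j \<Longrightarrow> e k = 0"
  shows "\<bar>tail n\<bar> \<le> (1/Q) * (1 - 2/3 * r j)"
    and "n = s j - 1 \<Longrightarrow> (1/Q) * (1 - 4/3 * r j) \<le> \<bar>tail n\<bar>"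
    and "0 < (-1)^j * tail n"
proof -
  define \<sigma> :: real where "\<sigma> = (-1)^j"
  define a where "a = real (u n) / real (u (s j))"
  define \<tau> where "\<tau> = tail (s (Suc j))"
  have ss: "\<sigma> * \<sigma> = 1" unfolding \<sigma>_def by (simp add: power_mult_distrib[symmetric])
  have sa: "\<bar>\<sigma>\<bar> = 1" unfolding \<sigma>_def by simp
  have tn: "tail n = a * (\<sigma> + tail (s j))" using tail_jump[OF n nb] unfolding a_def \<sigma>_def e_s by simp
  have ts: "tail (s j) = r j * (- \<sigma> + \<tau>)" using tail_s[of j] unfolding \<sigma>_def \<tau>_def by simp
  have tau: "\<bar>\<tau>\<bar> \<le> 1/3" unfolding \<tau>_def by (rule tail_s_bound)
  have st: "\<bar>\<sigma> * \<tau>\<bar> \<le> 1/3" using tau sa by (simp add: abs_mult)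
  define Z where "Z = 1 + \<sigma> * tail (s j)"
  have Z: "Z = 1 + r j * (-1 + \<sigma> * \<tau>)" unfolding Z_def ts using ss by (simp add: algebra_simps)
  have Zu: "Z \<le> 1 - 2/3 * r j"
  proof -
    have "r j * (-1 + \<sigma> * \<tau>) \<le> r j * (-2/3)" using st r_pos[of j] by (intro mult_left_mono) auto
    thus ?thesis unfolding Z by simp
  qed
  have Zl: "1 - 4/3 * r j \<le> Z"
  proof -
    have "r j * (-4/3) \<le> r j * (-1 + \<sigma> * \<tau>)" using st r_pos[of j] by (intro mult_left_mono) auto
    thus ?thesis unfolding Z by simp
  qed
  have Zp: "0 < Z" using Zl r_le[of j] by simp
  have sn: "\<sigma> * tail n = a * Z" unfolding tn Z_def using ss by (simp add: algebra_simps)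
  have apos: "0 < a" unfolding a_def using u_pos[of n] u_pos[of "s j"] by simp
  have Qp: "0 < real Q" using Q2 by simp
  have usj: "real (u (s j)) = real Q * real (u (s j - 1))" using sQ[of j] by simp
  have ab: "a \<le> 1/Q"
  proof -
    have "u n \<le> u (s j - 1)" using n by (intro u_le) simp
    hence "real (u n) \<le> real (u (s j - 1))" by simp
    hence "real (u n) * Q \<le> real (u (s j))" using usj Qp by simp
    thus ?thesis unfolding a_def using u_pos[of "s j"] Qp by (simp add: field_simps)
  qed
  have atn: "\<bar>tail n\<bar> = a * Z"
  proof -
    have "\<bar>tail n\<bar> = \<bar>\<sigma> * tail n\<bar>" using sa by (simp add: abs_mult)
    thus ?thesis using sn apos Zp by simp
  qed
  show "\<bar>tail n\<bar> \<le> (1/Q) * (1 - 2/3 * r j)"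
    unfolding atn using ab Zu apos Zp by (intro mult_mono) auto
  show "0 < (-1)^j * tail n" using sn apos Zp unfolding \<sigma>_def by simp
  assume "n = s j - 1"
  hence "a = 1/Q" unfolding a_def using usj u_pos[of n] Qp by (simp add: field_simps)
  thus "(1/Q) * (1 - 4/3 * r j) \<le> \<bar>tail n\<bar>"
    unfolding atn using Zl Qp \<open>a = 1/Q\<close> by (simp add: divide_right_mono)
qed

lemma res_upper: "\<exists>j. \<bar>tail n\<bar> \<le> (1/Q) * (1 - 2/3 * r j)"
  using next_ex[of n] est(1) by blast

lemma tail_half: "\<bar>tail n\<bar> < 1/2"
proof -
  obtain j where "\<bar>tail n\<bar> \<le> (1/Q) * (1 - 2/3 * r j)" using res_upper by blast
  also have "\<dots> < 1/Q" using r_pos[of j] Q2 by (simp add: divide_strict_right_mono)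
  also have "\<dots> \<le> 1/2" using Q2 by simp
  finally show ?thesis .
qed

lemma tnorm_un: "tnorm (real (u n) * x) = \<bar>tail n\<bar>"
proof -
  have "tnorm (real (u n) * x) = tnorm (tail n + (real (u n) * x - tail n))" by simp
  also have "\<dots> = tnorm (tail n)" by (rule tnorm_shift[OF int_part])
  also have "\<dots> = \<bar>tail n\<bar>" by (rule tnorm_small[OF tail_half])
  finally show ?thesis .
qed

lemma res_lower: "(1/Q) * (1 - 4/3 * r j) \<le> tnorm (real (u (s j - 1)) * x)"
proof -
  have n: "s j - 1 < s j" using s_ge[of j] by simp
  have nb: "e k = 0" if "s j - 1 < k" "k < s j" for k using that by simp
  show ?thesis unfolding tnorm_un using est(2)[OF n nb] by simp
qed

lemma x_props: "0 < x" "x < 1" "tnorm x \<le> tnorm (real (u 0) * x)"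
proof -
  have n: "0 < s 0" using s0 by simp
  have nb: "e k = 0" if "0 < k" "k < s 0" for k
  proof (rule e_not, rule notI)
    assume "k \<in> range s" then obtain i where "k = s i" by auto
    hence "s 0 \<le> k" using strict_mono_less_eq[OF s_smono] by simp
    thus False using that by simp
  qed
  have tp: "0 < tail 0" using est(3)[OF n nb] by simp
  have u0r: "1 \<le> real (u 0)" using u0 by simp
  have xe: "x = tail 0 / real (u 0)" using x_tail0 u0r by (simp add: field_simps)
  show "0 < x" unfolding xe using tp u0r by simp
  have "x \<le> tail 0" unfolding xe using tp u0r by (simp add: divide_le_eq)
  also have "tail 0 < 1/2" using tail_half[of 0] by simp
  finally show "x < 1" by simp
  have "tnorm x \<le> \<bar>x\<bar>" by (rule tnorm_le)
  also have "\<bar>x\<bar> \<le> \<bar>tail 0\<bar>" using \<open>x \<le> tail 0\<close> \<open>0 < x\<close> by simp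
  also have "\<dots> = tnorm (real (u 0) * x)" using tnorm_un[of 0] by simp
  finally show "tnorm x \<le> tnorm (real (u 0) * x)" .
qed

lemma e_rec: "e (Suc n) = (real (u (Suc n)) / real (u n)) * tail n - tail (Suc n)"
  using tail_step[of n] u_pos[of n] u_pos[of "Suc n"] by (simp add: field_simps)

lemma range_e: "range s = {k. e k \<noteq> 0}"
  using e_s e_not by force

end

lemma tseq_inj:
  assumes A: "tseq u Q s" and B: "tseq u Q s'" and eq: "tseq.x u s = tseq.x u s'"
  shows "range s = range s'"
proof -
  interpret A: tseq u Q s by (rule A)
  interpret B: tseq u Q s' by (rule B)
  have tl: "A.tail n = B.tail n" for n
  proof -
    have "(real (u n) * B.x - B.tail n) - (real (u n) * A.x - A.tail n) \<in> \<int>"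
      using A.int_part[of n] B.int_part[of n] by (rule Ints_diff[rotated])
    hence d: "A.tail n - B.tail n \<in> \<int>" using eq by simp
    have "\<bar>A.tail n - B.tail n\<bar> < 1" using A.tail_half[of n] B.tail_half[of n] by linarith
    from d obtain m where m: "A.tail n - B.tail n = of_int m" by (auto elim: Ints_cases)
    with \<open>\<bar>A.tail n - B.tail n\<bar> < 1\<close> have "\<bar>m\<bar> < 1" by linarith
    hence "m = 0" by simp
    with m have "A.tail n - B.tail n = 0" by simp
    thus ?thesis by simp
  qed
  have "A.e k = B.e k" for k
  proof (cases k)
    case 0 then show ?thesis using A.e0 B.e0 by simp
  next
    case (Suc n) then show ?thesis using A.e_rec[of n] B.e_rec[of n] tl by simp
  qed
  thus ?thesis using A.range_e B.range_e by simp
qed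


lemma tnorm_half: "tnorm y \<le> 1/2"
  unfolding tnorm_def using of_int_round_abs_le[of y] by (simp add: abs_minus_commute)

context tseq
begin

lemma rho_simp: "rho_u u x 0 = (SUP n. max (tnorm x) (tnorm (real (u n) * x)))"
  unfolding rho_u_def by simp

lemma rho_le: assumes "\<And>n. tnorm (real (u n) * x) \<le> c" shows "rho_u u x 0 \<le> c"
  unfolding rho_simp
proof (rule cSUP_least)
  fix n
  have "tnorm x \<le> c" using x_props(3) assms[of 0] by simp
  thus "max (tnorm x) (tnorm (real (u n) * x)) \<le> c" using assms[of n] by simp
qed simp

lemma rho_ge: "tnorm (real (u n) * x) \<le> rho_u u x 0"
  unfolding rho_simp
proof (rule cSUP_upper2[where x=n])
  show "bdd_above (range (\<lambda>n. max (tnorm x) (tnorm (real (u n) * x))))"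
  proof (rule bdd_aboveI[of _ "1/2"])
    fix y assume "y \<in> range (\<lambda>n. max (tnorm x) (tnorm (real (u n) * x)))"
    then obtain n where "y = max (tnorm x) (tnorm (real (u n) * x))" by auto
    thus "y \<le> 1/2" using tnorm_half[of x] tnorm_half[of "real (u n) * x"] by (simp add: max_def)
  qed
qed auto

lemma part_a:
  assumes g: "\<And>j. s j + j \<le> s (Suc j)"
  shows "rho_u u x 0 = 1 / Q"
proof (rule antisym)
  have Qp: "0 < real Q" using Q2 by simp
  show "rho_u u x 0 \<le> 1 / Q"
  proof (rule rho_le)
    fix n
    obtain j where j: "\<bar>tail n\<bar> \<le> (1/Q) * (1 - 2/3 * r j)" using res_upper by blast
    also have "\<dots> \<le> 1/Q" using r_pos[of j] Qp by (simp add: divide_right_mono)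
    finally show "tnorm (real (u n) * x) \<le> 1/Q" unfolding tnorm_un .
  qed
  have rj: "r j \<le> (1/2) ^ j" for j
  proof -
    have "2 ^ j * u (s j) \<le> u (s j + j)" by (rule u_pow)
    also have "\<dots> \<le> u (s (Suc j))" using g[of j] by (rule u_le)
    finally have "real (2 ^ j * u (s j)) \<le> real (u (s (Suc j)))" by (simp only: of_nat_le_iff)
    hence "2 ^ j * real (u (s j)) \<le> real (u (s (Suc j)))" by simp
    thus ?thesis unfolding r_def using u_pos[of "s j"] u_pos[of "s (Suc j)"]
      by (simp add: field_simps power_one_over)
  qed
  show "1 / Q \<le> rho_u u x 0"
  proof (rule ccontr)
    assume "\<not> 1 / Q \<le> rho_u u x 0"
    hence "0 < (1/Q - rho_u u x 0) * Q * 3/4" using Qp by simp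
    hence "\<exists>k. (1/2::real) ^ k < (1/Q - rho_u u x 0) * Q * 3/4"
      by (rule real_arch_pow_inv) simp
    then obtain k where k: "(1/2::real) ^ k < (1/Q - rho_u u x 0) * Q * 3/4" by blast
    have "(1/Q) * (1 - 4/3 * r k) \<le> rho_u u x 0" using res_lower[of k] rho_ge order_trans by blast
    moreover have "(1/Q) * (1 - 4/3 * (1/2)^k) \<le> (1/Q) * (1 - 4/3 * r k)"
      using rj[of k] Qp by (intro mult_left_mono) auto
    ultimately have h: "(1/Q) * (1 - 4/3 * (1/2)^k) \<le> rho_u u x 0" by simp
    define p where "p = (1/2::real)^k"
    define \<rho> where "\<rho> = rho_u u x 0"
    have h2: "1 - 4/3 * p = Q * ((1/Q) * (1 - 4/3 * p))" using Qp by simp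
    also have "\<dots> \<le> Q * \<rho>" using h Qp unfolding p_def \<rho>_def by (intro mult_left_mono) auto
    finally have h3: "1 - 4/3 * p \<le> Q * \<rho>" .
    have "(1/Q - \<rho>) * Q * 3/4 = (1 - Q * \<rho>) * 3/4" using Qp by (simp add: field_simps)
    with k have h4: "p < (1 - Q * \<rho>) * 3/4" unfolding p_def \<rho>_def by simp
    from h4 h3 show False by (simp add: field_simps)
  qed
qed

lemma part_b:
  assumes g: "\<And>j. s (Suc j) \<le> s j + G" and B: "\<And>k. u (Suc k) \<le> Bd * u k"
  shows "rho_u u x 0 < 1 / Q"
proof -
  have Qp: "0 < real Q" using Q2 by simp
  have B1: "1 \<le> Bd" using B[of 0] u_pos[of 0] u_pos[of 1]
    by (metis Suc_le_eq dvd_imp_le less_one mult_eq_0_iff nat_less_le not_less zero_less_iff_neq_zero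
        dvd_triv_right le_trans mult_le_cancel2 nat_mult_1)
  have up: "u (a + d) \<le> Bd ^ d * u a" for a d
  proof (induction d)
    case 0 show ?case by simp
  next
    case (Suc d)
    have "u (a + Suc d) \<le> Bd * u (a + d)" using B[of "a + d"] by simp
    also have "\<dots> \<le> Bd * (Bd ^ d * u a)" using Suc by simp
    finally show ?case by (simp add: mult.assoc)
  qed
  have rj: "1 / real (Bd ^ G) \<le> r j" for j
  proof -
    define d where "d = s (Suc j) - s j"
    have sd: "s (Suc j) = s j + d" unfolding d_def using s_gap[of j] by simp
    have "d \<le> G" unfolding d_def using g[of j] by simp
    have "u (s (Suc j)) \<le> Bd ^ d * u (s j)" unfolding sd by (rule up)
    also have "\<dots> \<le> Bd ^ G * u (s j)" using \<open>d \<le> G\<close> B1 by (intro mult_right_mono power_increasing) auto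
    finally have "real (u (s (Suc j))) \<le> real (Bd ^ G) * real (u (s j))"
      by (metis of_nat_le_iff of_nat_mult)
    moreover have "0 < real (Bd ^ G)" using B1 by simp
    ultimately show ?thesis unfolding r_def using u_pos[of "s j"] u_pos[of "s (Suc j)"]
      by (simp add: field_simps)
  qed
  define c where "c = (1/Q) * (1 - 2/3 * (1 / real (Bd ^ G)))"
  have "rho_u u x 0 \<le> c"
  proof (rule rho_le)
    fix n
    obtain j where j: "\<bar>tail n\<bar> \<le> (1/Q) * (1 - 2/3 * r j)" using res_upper by blast
    also have "\<dots> \<le> c" unfolding c_def using rj[of j] Qp by (intro mult_left_mono) auto
    finally show "tnorm (real (u n) * x) \<le> c" unfolding tnorm_un .
  qed
  also have "c < 1/Q" unfolding c_def using Qp B1 by (simp add: divide_strict_right_mono)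
  finally show ?thesis .
qed

end


lemma ratio_ge2: assumes "a_seq u" "1 \<le> n" shows "2 \<le> ratio u n"
proof -
  interpret aseq u using assms(1) by (rule aseq.intro)
  obtain m where n: "n = Suc m" using assms(2) by (cases n) auto
  obtain k where k: "u (Suc m) = u m * k" using dvd1[of m] by (metis dvdE)
  have "ratio u n = k" unfolding ratio_def n k using u_pos[of m] by simp
  moreover have "2 * u m \<le> u m * k" using u_dbl[of m] k by simp
  hence "2 \<le> k" using u_pos[of m] by (simp add: mult.commute)
  ultimately show ?thesis by simp
qed

lemma qlim_facts:
  assumes a: "a_seq u" and b: "\<exists>B. \<forall>n. ratio u n \<le> B"
  shows "\<exists>Q::nat. q_lim u = real Q \<and> 2 \<le> Q \<and> S_star u = {m. ratio u m = Q} \<and> infinite (S_star u)"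
proof -
  obtain B where B: "\<And>n. ratio u n \<le> B" using b by blast
  define V where "V = {v. v \<le> B \<and> infinite {n. ratio u n = v}}"
  have finV: "finite V" unfolding V_def by (rule finite_subset[of _ "{..B}"]) auto
  have "UNIV = (\<Union>v\<in>{..B}. {n. ratio u n = v})" using B by auto
  hence "\<exists>v\<in>{..B}. infinite {n. ratio u n = v}"
  proof -
    assume eqU: "UNIV = (\<Union>v\<in>{..B}. {n. ratio u n = v})"
    show ?thesis
    proof (rule ccontr)
      assume "\<not> ?thesis"
      hence "\<forall>v\<in>{..B}. finite {n. ratio u n = v}" by blast
      hence "finite (\<Union>v\<in>{..B}. {n. ratio u n = v})" by (intro finite_UN_I) auto
      with eqU show False by (metis infinite_UNIV_nat)
    qed
  qed
  hence neV: "V \<noteq> {}" unfolding V_def by auto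
  define L where "L = Max V"
  have LV: "L \<in> V" unfolding L_def using finV neV by simp
  have above: "finite {n. L < ratio u n}"
  proof -
    have "{n. L < ratio u n} = (\<Union>v\<in>{L<..B}. {n. ratio u n = v})" using B by auto
    moreover have "finite {n. ratio u n = v}" if "v \<in> {L<..B}" for v
    proof (rule ccontr)
      assume "infinite {n. ratio u n = v}"
      hence "v \<in> V" using that unfolding V_def by auto
      hence "v \<le> L" unfolding L_def using finV by simp
      thus False using that by simp
    qed
    ultimately show ?thesis by simp
  qed
  then obtain K where K: "\<And>n. L < ratio u n \<Longrightarrow> n \<le> K"
    unfolding finite_nat_set_iff_bounded_le by blast
  have N: "ratio u n \<le> L" if "Suc K \<le> n" for n
  proof (rule ccontr)
    assume "\<not> ratio u n \<le> L"
    hence "L < ratio u n" by simp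
    hence "n \<le> K" by (rule K)
    thus False using that by simp
  qed
  have infL: "infinite {n. ratio u n = L}" using LV unfolding V_def by simp
  have lim: "limsup (\<lambda>n. ereal (real (ratio u n))) = ereal (real L)"
  proof (rule antisym)
    show "limsup (\<lambda>n. ereal (real (ratio u n))) \<le> ereal (real L)"
      by (rule Limsup_bounded) (use N in \<open>auto simp: eventually_sequentially\<close>)
    show "ereal (real L) \<le> limsup (\<lambda>n. ereal (real (ratio u n)))"
    proof (rule ccontr)
      assume "\<not> ereal (real L) \<le> limsup (\<lambda>n. ereal (real (ratio u n)))"
      hence "limsup (\<lambda>n. ereal (real (ratio u n))) < ereal (real L)" by simp
      hence "eventually (\<lambda>n. ereal (real (ratio u n)) < ereal (real L)) sequentially"
        by (rule Limsup_lessD)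
      then obtain M where M: "\<And>n. M \<le> n \<Longrightarrow> ratio u n < L" by (auto simp: eventually_sequentially)
      from infL have "\<exists>n\<ge>M. n \<in> {n. ratio u n = L}" unfolding infinite_nat_iff_unbounded_le by blast
      then obtain n where "n \<ge> M" "ratio u n = L" by blast
      with M[of n] show False by simp
    qed
  qed
  have q: "q_lim u = real L" unfolding q_lim_def lim by simp
  from infL have "\<exists>n\<ge>1. n \<in> {n. ratio u n = L}" unfolding infinite_nat_iff_unbounded_le by blast
  then obtain n where n: "n \<ge> 1" "ratio u n = L" by blast
  have L2: "2 \<le> L" using ratio_ge2[OF a n(1)] n(2) by simp
  have S: "S_star u = {m. ratio u m = L}" unfolding S_star_def q by simp
  show ?thesis using q L2 S infL by (intro exI[of _ L]) simp
qed

lemma enum_gap: assumes "infinite S" "a \<le> c" shows "enumerate S a + (c - a) \<le> enumerate S c"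
  using assms(2)
proof (induction c rule: dec_induct)
  case base show ?case by simp
next
  case (step c)
  have "enumerate S c < enumerate S (Suc c)" by (rule enumerate_step[OF assms(1)])
  with step show ?case by (simp add: Suc_diff_le)
qed

lemma enum_gap_up:
  assumes "infinite S" "\<And>k. enumerate S (Suc k) - enumerate S k \<le> C" "a \<le> c"
  shows "enumerate S c \<le> enumerate S a + (c - a) * C"
  using assms(3)
proof (induction c rule: dec_induct)
  case base show ?case by simp
next
  case (step c)
  have "enumerate S c < enumerate S (Suc c)" by (rule enumerate_step[OF assms(1)])
  hence "enumerate S (Suc c) \<le> enumerate S c + C" using assms(2)[of c] by simp
  also have "\<dots> \<le> enumerate S a + (c - a) * C + C" using step by simp
  also have "\<dots> = enumerate S a + (Suc c - a) * C" using step by (simp add: Suc_diff_le)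
  finally show ?case .
qed

lemma h_mono: assumes "\<And>j. h j + 4 \<le> h (Suc j)" "i < j" shows "h i + (4::nat) \<le> h j"
  using assms(2)
proof (induction j)
  case 0 then show ?case by simp
next
  case (Suc j)
  show ?case
  proof (cases "i = j")
    case True then show ?thesis using assms(1)[of j] by simp
  next
    case False
    hence "h i + 4 \<le> h j" using Suc by simp
    also have "\<dots> \<le> h (Suc j)" using assms(1)[of j] by simp
    finally show ?thesis .
  qed
qed

lemma h_ge0: assumes "\<And>j. h j + 4 \<le> h (Suc j)" shows "h 0 \<le> (h j :: nat)"
proof (cases j)
  case 0 then show ?thesis by simp
next
  case (Suc k) then show ?thesis using h_mono[where h=h and i=0 and j=j, OF assms] by simp
qed

lemma family:
  assumes a: "a_seq u" and Q2: "2 \<le> Q" and S: "infinite S"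
    and uQ: "\<And>m. m \<in> S \<Longrightarrow> 1 \<le> m \<Longrightarrow> u m = Q * u (m - 1)"
    and h: "\<And>j. h j + 4 \<le> h (Suc j)" and h0: "1 \<le> h 0"
  shows "tseq u Q (\<lambda>j. enumerate S (h j + (if b j then 1 else 0)))"
proof -
  define f where "f j = h j + (if b j then 1 else 0)" for j
  have f1: "1 \<le> f j" for j unfolding f_def using h_ge0[where h=h and j=j, OF h] h0 by simp
  have s1: "1 \<le> enumerate S (f j)" for j using le_enumerate[OF S, of "f j"] f1[of j] by simp
  have fg: "f j + 3 \<le> f (Suc j)" for j unfolding f_def using h[of j] by simp
  show ?thesis unfolding f_def[symmetric]
  proof (intro tseq.intro aseq.intro tseq_axioms.intro)
    show "a_seq u" by (rule a)
    show "2 \<le> Q" by (rule Q2)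
    show "u (enumerate S (f j)) = Q * u (enumerate S (f j) - 1)" for j
      using uQ[OF enumerate_in_set[OF S] s1] .
    show "enumerate S (f j) + 2 \<le> enumerate S (f (Suc j))" for j
      using enum_gap[OF S, of "f j" "f (Suc j)"] fg[of j] by simp
    show "1 \<le> enumerate S (f 0)" by (rule s1)
  qed
qed

lemma family_inj:
  assumes a: "a_seq u" and Q2: "2 \<le> Q" and S: "infinite S"
    and uQ: "\<And>m. m \<in> S \<Longrightarrow> 1 \<le> m \<Longrightarrow> u m = Q * u (m - 1)"
    and h: "\<And>j. h j + 4 \<le> h (Suc j)" and h0: "1 \<le> h 0"
  shows "inj (\<lambda>b. tseq.x u (\<lambda>j. enumerate S (h j + (if b j then 1 else 0))))"
proof (rule injI)
  fix b b'
  define f where "f b j = h j + (if b j then 1 else 0)" for b :: "nat \<Rightarrow> bool" and j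
  assume eq: "tseq.x u (\<lambda>j. enumerate S (h j + (if b j then 1 else 0)))
            = tseq.x u (\<lambda>j. enumerate S (h j + (if b' j then 1 else 0)))"
  have T1: "tseq u Q (\<lambda>j. enumerate S (h j + (if b j then 1 else 0)))"
    by (rule family[OF a Q2 S uQ h h0])
  have T2: "tseq u Q (\<lambda>j. enumerate S (h j + (if b' j then 1 else 0)))"
    by (rule family[OF a Q2 S uQ h h0])
  have "range (\<lambda>j. enumerate S (h j + (if b j then 1 else 0)))
      = range (\<lambda>j. enumerate S (h j + (if b' j then 1 else 0)))"
    by (rule tseq_inj[OF T1 T2 eq])
  moreover have "range (\<lambda>j. enumerate S (h j + (if c j then 1 else 0))) = enumerate S ` range (f c)" for c
    unfolding f_def by (rule range_composition)
  ultimately have "enumerate S ` range (f b) = enumerate S ` range (f b')" by simp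
  hence R: "range (f b) = range (f b')" using inj_enumerate[OF S] by (simp add: inj_image_eq_iff)
  have key: "c j \<longleftrightarrow> h j + 1 \<in> range (f c)" for c j
  proof
    assume "c j"
    hence "f c j = h j + 1" unfolding f_def by simp
    thus "h j + 1 \<in> range (f c)" using rangeI[of "f c" j] by simp
  next
    assume "h j + 1 \<in> range (f c)"
    then obtain i where i: "h j + 1 = f c i" by auto
    consider "i < j" | "i = j" | "j < i" by arith
    then show "c j"
    proof cases
      case 1 then have "h i + 4 \<le> h j" by (rule h_mono[where h=h, OF h])
      moreover have "f c i \<le> h i + 1" unfolding f_def by simp
      ultimately show ?thesis using i by linarith
    next
      case 2 with i show ?thesis unfolding f_def by (cases "c j") simp_all
    next
      case 3 then have "h j + 4 \<le> h i" by (rule h_mono[where h=h, OF h])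
      moreover have "h i \<le> f c i" unfolding f_def by simp
      ultimately show ?thesis using i by linarith
    qed
  qed
  show "b = b'"
  proof
    fix j show "b j = b' j" using key[of b j] key[of b' j] R by simp
  qed
qed

lemma real_lepoll_bits: "(UNIV::real set) \<lesssim> (UNIV :: (nat \<Rightarrow> bool) set)"
  unfolding lepoll_def
proof (intro exI conjI)
  show "inj_on (\<lambda>y. \<lambda>n. real_of_rat (from_nat n) < y) UNIV"
  proof (rule inj_onI)
    fix a b :: real
    assume eq: "(\<lambda>n. real_of_rat (from_nat n) < a) = (\<lambda>n. real_of_rat (from_nat n) < b)"
    have *: False if pq: "p < q" and fq: "(\<lambda>n. real_of_rat (from_nat n) < p) = (\<lambda>n. real_of_rat (from_nat n) < q)" for p q :: real
    proof -
      obtain r where r: "p < real_of_rat r" "real_of_rat r < q" using of_rat_dense[OF pq] by blast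
      have "(real_of_rat (from_nat (to_nat r)) < p) = (real_of_rat (from_nat (to_nat r)) < q)"
        using fun_cong[OF fq, of "to_nat r"] .
      thus False using r by simp
    qed
    show "a = b"
    proof (rule ccontr)
      assume "a \<noteq> b"
      hence "a < b \<or> b < a" by linarith
      thus False using * eq by metis
    qed
  qed
qed simp

lemma card_from_family:
  fixes F :: "(nat \<Rightarrow> bool) \<Rightarrow> real"
  assumes "inj F" "\<And>b. F b \<in> T" shows "T \<approx> (UNIV :: real set)"
proof (rule lepoll_antisym)
  show "T \<lesssim> (UNIV :: real set)" by (rule subset_imp_lepoll) simp
  have "(UNIV :: (nat \<Rightarrow> bool) set) \<lesssim> T" unfolding lepoll_def using assms by auto
  thus "(UNIV :: real set) \<lesssim> T" using real_lepoll_bits lepoll_trans by blast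
qed


theorem propositionC:
  fixes u :: "nat \<Rightarrow> nat"
  assumes "a_seq u"
    and "\<exists>B. \<forall>n. ratio u n \<le> B"
  shows "(\<not> (\<exists>C. \<forall>k. delta u k \<le> C) \<longrightarrow>
            {x \<in> {0..<1::real}. rho_u u x 0 = 1 / q_lim u} \<approx> (UNIV :: real set))
       \<and> ((\<exists>C. \<forall>k. delta u k \<le> C) \<longrightarrow>
            {x \<in> {0..<1::real}. rho_u u x 0 < 1 / q_lim u} \<approx> (UNIV :: real set))"
proof -
  interpret aseq u using assms(1) by (rule aseq.intro)
  obtain B where B: "\<And>n. ratio u n \<le> B" using assms(2) by blast
  obtain Q where Q: "q_lim u = real Q" "2 \<le> Q" "S_star u = {m. ratio u m = Q}" "infinite (S_star u)"
    using qlim_facts[OF assms] by blast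
  define S where "S = S_star u"
  have Sinf: "infinite S" using Q(4) unfolding S_def .
  have uQ: "u m = Q * u (m - 1)" if m1: "m \<in> S" and m2: "1 \<le> m" for m
  proof -
    have r: "ratio u m = Q" using m1 Q(3) unfolding S_def by simp
    obtain m' where m: "m = Suc m'" using m2 by (cases m) auto
    have "u m = u m' * (u m div u m')" using dvd1[of m'] m by simp
    thus ?thesis using r m unfolding ratio_def by (simp add: mult.commute)
  qed
  have uB: "u (Suc k) \<le> B * u k" for k
  proof -
    have "u (Suc k) = u k * (u (Suc k) div u k)" using dvd1[of k] by simp
    also have "u (Suc k) div u k = ratio u (Suc k)" unfolding ratio_def by simp
    also have "u k * ratio u (Suc k) \<le> u k * B" using B[of "Suc k"] by simp
    finally show ?thesis by (simp add: mult.commute)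
  qed
  have partA: "{x \<in> {0..<1::real}. rho_u u x 0 = 1 / q_lim u} \<approx> (UNIV :: real set)"
  proof -
    define h where "h j = 1 + 4 * j + j * j" for j :: nat
    have h: "h j + 4 \<le> h (Suc j)" for j unfolding h_def by simp
    have h0: "1 \<le> h 0" unfolding h_def by simp
    define sb where "sb b j = enumerate S (h j + (if b j then 1 else 0))" for b :: "nat \<Rightarrow> bool" and j
    have T: "tseq u Q (sb b)" for b unfolding sb_def by (rule family[OF assms(1) Q(2) Sinf uQ h h0])
    have inj: "inj (\<lambda>b. tseq.x u (sb b))" unfolding sb_def by (rule family_inj[OF assms(1) Q(2) Sinf uQ h h0])
    have mem: "tseq.x u (sb b) \<in> {x \<in> {0..<1::real}. rho_u u x 0 = 1 / q_lim u}" for b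
    proof -
      interpret tseq u Q "sb b" by (rule T)
      have g: "sb b j + j \<le> sb b (Suc j)" for j
      proof -
        have le: "h j + (if b j then 1 else 0) \<le> h (Suc j) + (if b (Suc j) then 1 else 0)"
          using h[of j] by simp
        have "j \<le> (h (Suc j) + (if b (Suc j) then 1 else 0)) - (h j + (if b j then 1 else 0))"
          unfolding h_def by simp
        thus ?thesis using enum_gap[OF Sinf le] unfolding sb_def by simp
      qed
      show ?thesis using x_props part_a[OF g] Q(1) by simp
    qed
    show ?thesis by (rule card_from_family[OF inj mem])
  qed
  have partB: "{x \<in> {0..<1::real}. rho_u u x 0 < 1 / q_lim u} \<approx> (UNIV :: real set)"
    if C: "\<forall>k. delta u k \<le> C" for C
  proof -
    have C': "enumerate S (Suc k) - enumerate S k \<le> C" for k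
      using C unfolding delta_def S_def by simp
    define h where "h j = 1 + 4 * j" for j :: nat
    have h: "h j + 4 \<le> h (Suc j)" for j unfolding h_def by simp
    have h0: "1 \<le> h 0" unfolding h_def by simp
    define sb where "sb b j = enumerate S (h j + (if b j then 1 else 0))" for b :: "nat \<Rightarrow> bool" and j
    have T: "tseq u Q (sb b)" for b unfolding sb_def by (rule family[OF assms(1) Q(2) Sinf uQ h h0])
    have inj: "inj (\<lambda>b. tseq.x u (sb b))" unfolding sb_def by (rule family_inj[OF assms(1) Q(2) Sinf uQ h h0])
    have mem: "tseq.x u (sb b) \<in> {x \<in> {0..<1::real}. rho_u u x 0 < 1 / q_lim u}" for b
    proof -
      interpret tseq u Q "sb b" by (rule T)
      have g: "sb b (Suc j) \<le> sb b j + 5 * C" for j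
      proof -
        have le: "h j + (if b j then 1 else 0) \<le> h (Suc j) + (if b (Suc j) then 1 else 0)"
          using h[of j] by simp
        have d: "(h (Suc j) + (if b (Suc j) then 1 else 0)) - (h j + (if b j then 1 else 0)) \<le> 5"
          unfolding h_def by simp
        have "sb b (Suc j) \<le> sb b j + ((h (Suc j) + (if b (Suc j) then 1 else 0)) - (h j + (if b j then 1 else 0))) * C"
          using enum_gap_up[OF Sinf C' le] unfolding sb_def by simp
        also have "\<dots> \<le> sb b j + 5 * C" using d by (intro add_left_mono mult_right_mono) auto
        finally show ?thesis .
      qed
      show ?thesis using x_props part_b[OF g uB] Q(1) by simp
    qed
    show ?thesis by (rule card_from_family[OF inj mem])
  qed
  show ?thesis using partA partB by blast
qed

end
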